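(* Let $(\mathcal{X},\rho)$ be a totally bounded metric space, let $c:\mathcal{X}\to\mathcal{Y}$ be a concept, and let $\ell$ be the zero-one loss $\ell(x,y,\hat y)=\mathbb{1}\{y\neq\hat y\}$. Then there exists a sequence of instances $(x_t)_{t\ge1}$ in $\mathcal{X}$ on which the 1-nearest neighbor rule fails to achieve sublinear regret on $c$, i.e. such that $$\frac1T\sum_{t=1}^T \mathbb{1}\{c(x_t)\neq \hat y_t\}\not\to 0 \quad (T\to\infty),$$ if and only if there is no positive separation between classes: $$\inf_{x,x'\in\mathcal{X}:\,c(x)\neq c(x')}\rho(x,x')=0.$$
   Context: Online classification: at each time $t=1,2,\dots$ the learner receives $x_t\in\mathcal{X}$, predicts $\hat y_t\in\mathcal{Y}$, then sees the label $y_t=c(x_t)$ (realizable setting with fixed concept $c$). The 1-nearest neighbor rule predicts $\hat y_t=y_{\mathrm{NN}_t}$ where $\mathrm{NN}_t\in\arg\min_{\tau=1,\dots,t-1}\rho(x_t,x_\tau)$, with ties broken arbitrarily (the prediction at $t=1$ is arbitrary). Sublinear regret here means the average loss $\frac1T\sum_{t\le T}\ell(x_t,y_t,\hat y_t)$ converges to $0$. The infimum over an empty set is $+\infty$. *)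

theory Defs
  imports "HOL-Analysis.Analysis"
begin

definition nn_rule :: "('a::metric_space list \<Rightarrow> 'a \<Rightarrow> nat) \<Rightarrow> bool" where
  "nn_rule N \<longleftrightarrow> (\<forall>hs q. hs \<noteq> [] \<longrightarrow>
      N hs q < length hs \<and> (\<forall>i<length hs. dist q (hs ! N hs q) \<le> dist q (hs ! i)))"

definition nn_pred :: "('a list \<Rightarrow> 'a \<Rightarrow> nat) \<Rightarrow> 'b \<Rightarrow> ('a \<Rightarrow> 'b) \<Rightarrow> (nat \<Rightarrow> 'a) \<Rightarrow> nat \<Rightarrow> 'b" where
  "nn_pred N y1 c xs t = (if t = 0 then y1 else c (xs (N (map xs [0..<t]) (xs t))))"

definition avg_loss :: "('a list \<Rightarrow> 'a \<Rightarrow> nat) \<Rightarrow> 'b \<Rightarrow> ('a \<Rightarrow> 'b) \<Rightarrow> (nat \<Rightarrow> 'a) \<Rightarrow> nat \<Rightarrow> real" where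
  "avg_loss N y1 c xs T =
     (\<Sum>t<Suc T. if c (xs t) \<noteq> nn_pred N y1 c xs t then 1 else 0) / real (Suc T)"

end

theory Submission
  imports Defs
begin

lemma inf_zero_iff:
  fixes g :: "'p \<Rightarrow> real"
  assumes "\<And>p. g p \<ge> 0"
  shows "(INF p \<in> S. ereal (g p)) = 0 \<longleftrightarrow> (\<forall>e>0. \<exists>p\<in>S. g p < e)"
proof
  assume h: "(INF p \<in> S. ereal (g p)) = 0"
  show "\<forall>e>0. \<exists>p\<in>S. g p < e"
  proof (intro allI impI)
    fix e :: real assume "e > 0"
    then have "(INF p \<in> S. ereal (g p)) < ereal e" using h by simp
    then show "\<exists>p\<in>S. g p < e" by (simp add: INF_less_iff)
  qed
next
  assume h: "\<forall>e>0. \<exists>p\<in>S. g p < e"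
  have "(INF p \<in> S. ereal (g p)) \<le> 0"
  proof (rule ereal_le_epsilon2)
    fix e :: real assume "0 < e"
    then obtain p where "p \<in> S" "g p < e" using h by blast
    then have "(INF p \<in> S. ereal (g p)) \<le> ereal (g p)" by (intro INF_lower)
    also have "\<dots> \<le> 0 + ereal e" using \<open>g p < e\<close> by simp
    finally show "(INF p \<in> S. ereal (g p)) \<le> 0 + ereal e" .
  qed
  moreover have "0 \<le> (INF p \<in> S. ereal (g p))"
    using assms by (intro INF_greatest) simp
  ultimately show "(INF p \<in> S. ereal (g p)) = 0" by simp
qed

lemma nn_side:
  assumes "nn_rule N" "c b = c ((H @ [a]) ! N (H @ [a]) b)" "c a \<noteq> c b"
  shows "\<exists>h\<in>set H. c h = c b \<and> dist b h \<le> dist b a"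
proof -
  let ?H = "H @ [a]"
  let ?i = "N ?H b"
  have i: "?i < length ?H" and mn: "\<And>j. j < length ?H \<Longrightarrow> dist b (?H ! ?i) \<le> dist b (?H ! j)"
    using assms(1) unfolding nn_rule_def by (metis append_is_Nil_conv not_Cons_self2)+
  have "?i \<noteq> length H"
  proof
    assume "?i = length H"
    then have "?H ! ?i = a" by simp
    then show False using assms(2,3) by simp
  qed
  then have il: "?i < length H" using i by simp
  then have eq: "?H ! ?i = H ! ?i" by (simp add: nth_append)
  have "dist b (?H ! ?i) \<le> dist b (?H ! length H)" using mn[of "length H"] by simp
  then have "dist b (H ! ?i) \<le> dist b a" using eq by simp
  moreover have "c (H ! ?i) = c b" using assms(2) eq by simp
  ultimately show ?thesis using il by (metis nth_mem)
qed

lemma bad_exists: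
  fixes c :: "'a::metric_space \<Rightarrow> 'b"
  assumes nn: "nn_rule N" and small: "\<forall>e>0. \<exists>x y. c x \<noteq> c y \<and> dist x y < e"
  shows "\<exists>p. c (snd p) \<noteq> c ((H @ [fst p]) ! N (H @ [fst p]) (snd p))"
proof (rule ccontr)
  assume na: "\<not> ?thesis"
  define D where "D = {dist x y | x y. x \<in> set H \<and> y \<in> set H \<and> x \<noteq> y}"
  have fD: "finite D"
  proof -
    have "D \<subseteq> (\<lambda>(x,y). dist x y) ` (set H \<times> set H)" unfolding D_def by auto
    then show ?thesis by (rule finite_subset) simp
  qed
  define e where "e = (if D = {} then 1 else Min D / 3)"
  have Dpos: "\<forall>d\<in>D. d > 0" unfolding D_def by auto
  have epos: "e > 0" unfolding e_def using fD Dpos by auto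
  obtain a b where ab: "c a \<noteq> c b" "dist a b < e" using small epos by blast
  have 1: "c b = c ((H @ [a]) ! N (H @ [a]) b)" using na by (metis fst_conv snd_conv)
  have 2: "c a = c ((H @ [b]) ! N (H @ [b]) a)" using na by (metis fst_conv snd_conv)
  obtain h where h: "h \<in> set H" "c h = c b" "dist b h \<le> dist b a" using nn_side[OF nn 1] ab by metis
  obtain h' where h': "h' \<in> set H" "c h' = c a" "dist a h' \<le> dist a b" using nn_side[OF nn 2] ab by metis
  have "h \<noteq> h'" using h h' ab by auto
  then have inD: "dist h h' \<in> D" unfolding D_def using h h' by blast
  then have "D \<noteq> {}" by auto
  then have "Min D \<le> dist h h'" using fD inD by simp
  moreover have "dist h h' \<le> dist h b + dist b a + dist a h'"
    by (metis dist_triangle add.commute add_le_cancel_left dist_commute order_trans)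
  moreover have "dist h b + dist b a + dist a h' < 3 * e"
    using h h' ab by (simp add: dist_commute)
  ultimately show False using \<open>D \<noteq> {}\<close> unfolding e_def by simp
qed

definition badpair :: "('a::metric_space \<Rightarrow> 'b) \<Rightarrow> ('a list \<Rightarrow> 'a \<Rightarrow> nat) \<Rightarrow> 'a list \<Rightarrow> 'a \<times> 'a" where
  "badpair c N H = (SOME p. c (snd p) \<noteq> c ((H @ [fst p]) ! N (H @ [fst p]) (snd p)))"

primrec hist :: "('a::metric_space \<Rightarrow> 'b) \<Rightarrow> ('a list \<Rightarrow> 'a \<Rightarrow> nat) \<Rightarrow> nat \<Rightarrow> 'a list" where
  "hist c N 0 = [undefined]"
| "hist c N (Suc k) = hist c N k @ [fst (badpair c N (hist c N k)), snd (badpair c N (hist c N k))]"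

lemma hist_len: "length (hist c N k) = 2 * k + 1"
  by (induction k) auto

lemma hist_prefix: "k \<le> m \<Longrightarrow> i < length (hist c N k) \<Longrightarrow> hist c N m ! i = hist c N k ! i"
proof (induction m)
  case 0 then show ?case by simp
next
  case (Suc m)
  show ?case
  proof (cases "k = Suc m")
    case True then show ?thesis by simp
  next
    case False
    then have "k \<le> m" using Suc by simp
    then have "i < length (hist c N m)" using Suc hist_len[of c N k] hist_len[of c N m] by simp
    then show ?thesis using Suc \<open>k \<le> m\<close> by (simp add: nth_append)
  qed
qed

lemma hist_nth: "i < length (hist c N m) \<Longrightarrow> hist c N i ! i = hist c N m ! i"
proof (cases "i \<le> m")
  case True
  assume "i < length (hist c N m)"
  have "i < length (hist c N i)" using hist_len[of c N i] by simp
  then show ?thesis using hist_prefix[OF True, where c=c and N=N and i=i] by simp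
next
  case False
  assume a: "i < length (hist c N m)"
  then show ?thesis using hist_prefix[where k=m and m=i and c=c and N=N and i=i] False by simp
qed

lemma hist_map: "n \<le> length (hist c N m) \<Longrightarrow> map (\<lambda>t. hist c N t ! t) [0..<n] = take n (hist c N m)"
  by (rule nth_equalityI) (auto simp: hist_nth)

lemma nn_pred_facts:
  assumes "nn_rule N" "t > 0"
  shows "N (map xs [0..<t]) (xs t) < t \<and>
         nn_pred N y1 c xs t = c (xs (N (map xs [0..<t]) (xs t))) \<and>
         (\<forall>i<t. dist (xs t) (xs (N (map xs [0..<t]) (xs t))) \<le> dist (xs t) (xs i))"
proof -
  let ?H = "map xs [0..<t]"
  have ne: "?H \<noteq> []" using assms(2) by simp
  have h: "N ?H (xs t) < length ?H \<and> (\<forall>i<length ?H. dist (xs t) (?H ! N ?H (xs t)) \<le> dist (xs t) (?H ! i))"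
    using assms(1) ne unfolding nn_rule_def by blast
  have a: "N ?H (xs t) < t" using h by simp
  have b: "\<forall>i<t. dist (xs t) (xs (N ?H (xs t))) \<le> dist (xs t) (xs i)"
    using h a by auto
  have c: "?H ! N ?H (xs t) = xs (N ?H (xs t))" using a by simp
  show ?thesis using a b c assms(2) by (auto simp: nn_pred_def)
qed

lemma sum_ind: "(\<Sum>t\<in>A. if P t then 1 else 0 :: real) = real (card {t\<in>A. P t})" if "finite A"
  using that by (simp add: sum.If_cases Int_def conj_commute)

theorem proposition1:
  fixes c :: "'a::metric_space \<Rightarrow> 'b"
    and N :: "'a list \<Rightarrow> 'a \<Rightarrow> nat"
    and y1 :: 'b
  assumes "totally_bounded (UNIV :: 'a set)"
    and "nn_rule N"
  shows "(\<exists>xs :: nat \<Rightarrow> 'a. \<not> (avg_loss N y1 c xs \<longlonglongrightarrow> 0)) \<longleftrightarrow>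
         (INF p \<in> {(x, x'). c x \<noteq> c x'}. ereal (dist (fst p) (snd p))) = 0"
proof -
  let ?S = "{(x, x'). c x \<noteq> c x'}"
  have iff: "(INF p \<in> ?S. ereal (dist (fst p) (snd p))) = 0 \<longleftrightarrow>
      (\<forall>e>0. \<exists>p\<in>?S. dist (fst p) (snd p) < e)"
    by (rule inf_zero_iff) simp
  have iff2: "(\<forall>e>0. \<exists>p\<in>?S. dist (fst p) (snd p) < e) \<longleftrightarrow>
      (\<forall>e>0. \<exists>x y. c x \<noteq> c y \<and> dist x y < e)" by auto
  have "(\<exists>xs :: nat \<Rightarrow> 'a. \<not> (avg_loss N y1 c xs \<longlonglongrightarrow> 0)) \<longleftrightarrow>
      (\<forall>e>0. \<exists>x y. c x \<noteq> c y \<and> dist x y < e)"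
  proof
    assume "\<exists>xs :: nat \<Rightarrow> 'a. \<not> (avg_loss N y1 c xs \<longlonglongrightarrow> 0)"
    then obtain xs :: "nat \<Rightarrow> 'a" where nl: "\<not> (avg_loss N y1 c xs \<longlonglongrightarrow> 0)" by blast
    show "\<forall>e>0. \<exists>x y. c x \<noteq> c y \<and> dist x y < e"
    proof (rule ccontr)
      assume "\<not> ?thesis"
      then obtain d where d0: "d > 0" and d1: "\<forall>x y. c x \<noteq> c y \<longrightarrow> d \<le> dist x y"
        by (auto simp: not_less)
      have d: "d > 0" "\<And>x y. c x \<noteq> c y \<Longrightarrow> d \<le> dist x y" using d0 d1 by auto
      have d2: "d/2 > 0" using d(1) by simp
      have ex: "\<exists>K. finite K \<and> UNIV \<subseteq> (\<Union>x\<in>K. {y::'a. dist x y < d/2})"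
        using assms(1) d2 unfolding totally_bounded_metric by blast
      from ex obtain K where K0: "finite K \<and> UNIV \<subseteq> (\<Union>x\<in>K. {y::'a. dist x y < d/2})" ..
      have K: "finite K" "UNIV \<subseteq> (\<Union>x\<in>K. {y::'a. dist x y < d/2})" using K0 by simp_all
      define ctr where "ctr y = (SOME k. k \<in> K \<and> dist k y < d/2)" for y
      have ctr: "ctr y \<in> K \<and> dist (ctr y) y < d/2" for y
      proof -
        have "\<exists>k. k \<in> K \<and> dist k y < d/2" using K(2) by blast
        then show ?thesis unfolding ctr_def by (rule someI_ex)
      qed
      define mis where "mis t \<longleftrightarrow> c (xs t) \<noteq> nn_pred N y1 c xs t" for t
      have key: "ctr (xs t) \<noteq> ctr (xs t')" if "0 < t" "t < t'" "mis t'" for t t'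
      proof
        assume eq: "ctr (xs t) = ctr (xs t')"
        have "dist (xs t) (xs t') \<le> dist (xs t) (ctr (xs t)) + dist (ctr (xs t')) (xs t')"
          using eq dist_triangle by metis
        also have "\<dots> < d" using ctr[of "xs t"] ctr[of "xs t'"] by (simp add: dist_commute)
        finally have lt: "dist (xs t') (xs t) < d" by (simp add: dist_commute)
        let ?s = "N (map xs [0..<t']) (xs t')"
        have F: "?s < t'" "nn_pred N y1 c xs t' = c (xs ?s)"
            "\<forall>i<t'. dist (xs t') (xs ?s) \<le> dist (xs t') (xs i)"
          using nn_pred_facts[OF assms(2), of t' xs y1 c] that by auto
        have "dist (xs t') (xs ?s) < d" using F(3) that(2) lt by (meson le_less_trans)
        then have "c (xs t') = c (xs ?s)" using d(2) by (meson not_le)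
        then show False using that(3) F(2) unfolding mis_def by simp
      qed
      have bound: "avg_loss N y1 c xs T \<le> (1 + real (card K)) / real (Suc T)" for T
      proof -
        let ?M = "{t\<in>{..<Suc T}. 0 < t \<and> mis t}"
        have inj: "inj_on (\<lambda>t. ctr (xs t)) ?M"
        proof (rule inj_onI)
          fix t t' assume "t \<in> ?M" "t' \<in> ?M" "ctr (xs t) = ctr (xs t')"
          then have h: "0 < t" "0 < t'" "mis t" "mis t'" "ctr (xs t) = ctr (xs t')" by auto
          show "t = t'"
          proof (rule ccontr)
            assume "t \<noteq> t'"
            then have "t < t' \<or> t' < t" by arith
            then show False using key[of t t'] key[of t' t] h by auto
          qed
        qed
        have "card ?M \<le> card K"
          using card_inj_on_le[OF inj _ K(1)] ctr by blast
        have sub: "{t\<in>{..<Suc T}. mis t} \<subseteq> insert 0 ?M" by auto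
        have "card {t\<in>{..<Suc T}. mis t} \<le> card (insert 0 ?M)"
          by (rule card_mono[OF _ sub]) simp
        also have "\<dots> \<le> Suc (card ?M)" by (rule card_insert_le_m1) simp_all
        finally have cM: "card {t\<in>{..<Suc T}. mis t} \<le> 1 + card K" using \<open>card ?M \<le> card K\<close> by simp
        have "avg_loss N y1 c xs T = real (card {t\<in>{..<Suc T}. mis t}) / real (Suc T)"
          unfolding avg_loss_def mis_def by (subst sum_ind) auto
        also have "\<dots> \<le> (1 + real (card K)) / real (Suc T)"
        proof (rule divide_right_mono)
          have "real (card {t\<in>{..<Suc T}. mis t}) \<le> real (1 + card K)" using cM by (simp only: of_nat_le_iff)
          then show "real (card {t\<in>{..<Suc T}. mis t}) \<le> 1 + real (card K)" by simp
        qed simp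
        finally show ?thesis .
      qed
      have pos: "0 \<le> avg_loss N y1 c xs T" for T
        unfolding avg_loss_def by (intro divide_nonneg_pos sum_nonneg) auto
      have "(\<lambda>T. (1 + real (card K)) / real (Suc T)) \<longlonglongrightarrow> 0"
        using LIMSEQ_Suc[OF lim_const_over_n[of "1 + real (card K)"]] by simp
      moreover have e1: "eventually (\<lambda>T. (0::real) \<le> avg_loss N y1 c xs T) sequentially"
        by (intro always_eventually allI pos)
      moreover have e2: "eventually (\<lambda>T. avg_loss N y1 c xs T \<le> (1 + real (card K)) / real (Suc T)) sequentially"
        by (intro always_eventually allI bound)
      ultimately have "avg_loss N y1 c xs \<longlonglongrightarrow> 0"
        using tendsto_sandwich[OF e1 e2 tendsto_const] by blast
      then show False using nl by simp
    qed
  next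
    assume small: "\<forall>e>0. \<exists>x y. c x \<noteq> c y \<and> dist x y < e"
    define xs where "xs t = hist c N t ! t" for t
    have mis: "c (xs (2*k+2)) \<noteq> nn_pred N y1 c xs (2*k+2)" for k
    proof -
      let ?H = "hist c N k"
      let ?p = "badpair c N ?H"
      have p: "c (snd ?p) \<noteq> c ((?H @ [fst ?p]) ! N (?H @ [fst ?p]) (snd ?p))"
        unfolding badpair_def by (rule someI_ex[OF bad_exists[OF assms(2) small]])
      have x: "xs (2*k+2) = snd ?p"
        unfolding xs_def using hist_nth[of "2*k+2" c N "Suc k"] hist_len[of c N k]
        by (simp add: nth_append hist_len)
      have m: "map xs [0..<2*k+2] = ?H @ [fst ?p]"
        unfolding xs_def using hist_map[of "2*k+2" c N "Suc k"] hist_len[of c N k]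
        by (simp add: hist_len)
      let ?L = "map xs [0..<2*k+2]"
      have F: "N ?L (xs (2*k+2)) < 2*k+2"
          "nn_pred N y1 c xs (2*k+2) = c (xs (N ?L (xs (2*k+2))))"
        using nn_pred_facts[OF assms(2), of "2*k+2" xs y1 c] zero_less_Suc[of "2*k+1"] by simp_all
      have "?L ! N ?L (xs (2*k+2)) = xs (N ?L (xs (2*k+2)))"
        using F(1) by (simp only: nth_map_upt diff_zero add_0)
      then have "nn_pred N y1 c xs (2*k+2) = c (?L ! N ?L (xs (2*k+2)))" using F(2) by simp
      then show ?thesis using p by (simp only: x m not_False_eq_True)
    qed
    have low: "avg_loss N y1 c xs (2*m+2) \<ge> 1/3" for m
    proof -
      let ?f = "\<lambda>t. if c (xs t) \<noteq> nn_pred N y1 c xs t then 1 else 0 :: real"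
      have sub: "(\<lambda>j. 2*j+2) ` {..m} \<subseteq> {..<Suc (2*m+2)}" by auto
      have "real (Suc m) = (\<Sum>j\<le>m. ?f (2*j+2))" using mis by simp
      also have "\<dots> = sum ?f ((\<lambda>j. 2*j+2) ` {..m})"
        by (subst sum.reindex) (auto simp: inj_on_def)
      also have "\<dots> \<le> sum ?f {..<Suc (2*m+2)}"
        by (rule sum_mono2[OF _ sub]) auto
      finally have s: "real (Suc m) \<le> sum ?f {..<Suc (2*m+2)}" .
      have "1/3 \<le> real (Suc m) / real (Suc (2*m+2))" by (simp add: field_simps)
      also have "\<dots> \<le> avg_loss N y1 c xs (2*m+2)"
        unfolding avg_loss_def using s by (intro divide_right_mono) auto
      finally show ?thesis .
    qed
    have "\<not> (avg_loss N y1 c xs \<longlonglongrightarrow> 0)"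
    proof
      assume "avg_loss N y1 c xs \<longlonglongrightarrow> 0"
      then have "eventually (\<lambda>T. avg_loss N y1 c xs T < 1/3) sequentially"
        by (rule order_tendstoD) simp
      then obtain M where "\<And>T. T \<ge> M \<Longrightarrow> avg_loss N y1 c xs T < 1/3"
        unfolding eventually_sequentially by blast
      then have "avg_loss N y1 c xs (2*M+2) < 1/3" by simp
      then show False using low[of M] by simp
    qed
    then show "\<exists>xs :: nat \<Rightarrow> 'a. \<not> (avg_loss N y1 c xs \<longlonglongrightarrow> 0)" by blast
  qed
  then show ?thesis using iff iff2 by simp
qed

end
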